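(* Let $\mathcal{M}=\langle S;\{R_i\}_{i\in I}\rangle$ be a model, $I$ an $\mathcal{M}$-interpretation, $\Gamma=\{x_i:A_i\}_{1\le i\le n}$, $\Delta=\{a_j:B_j\}_{1\le j\le m}$, $u_i\in I(A_i)$ for $1\le i\le n$, and $\bar v_j\in I(B_j)^\perp$ for $1\le j\le m$. If $\Gamma\vdash t:A;\Delta$, then $t[x_1:=u_1,\dots,x_n:=u_n,a_1:=^*\bar v_1,\dots,a_m:=^*\bar v_m]\in I(A)$.
   Context: Formulas are built from propositional variables and $\perp$ using $\to,\wedge,\vee$. Terms $\mathcal{T}$ and $\mathcal{E}$-terms: with disjoint sets $\mathcal{X}$ ($\lambda$-variables) and $\mathcal{A}$ ($\mu$-variables), $\mathcal{T} ::= x \mid \lambda x.\mathcal{T} \mid (\mathcal{T}\ \mathcal{E}) \mid \langle \mathcal{T},\mathcal{T}\rangle \mid \omega_1\mathcal{T} \mid \omega_2\mathcal{T} \mid \mu a.\mathcal{T} \mid (a\ \mathcal{T})$ and $\mathcal{E} ::= \mathcal{T} \mid \pi_1 \mid \pi_2 \mid [x.\mathcal{T}, y.\mathcal{T}]$. Typing judgements $\Gamma\vdash t:A;\Delta$ are generated by: $\Gamma,x:A\vdash x:A;\Delta$; from $\Gamma,x:A\vdash t:B;\Delta$ infer $\Gamma\vdash\lambda x.t:A\to B;\Delta$; from $\Gamma\vdash u:A\to B;\Delta$ and $\Gamma\vdash v:A;\Delta$ infer $\Gamma\vdash(u\ v):B;\Delta$; from $\Gamma\vdash u:A;\Delta$,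 $\Gamma\vdash v:B;\Delta$ infer $\Gamma\vdash\langle u,v\rangle:A\wedge B;\Delta$; from $\Gamma\vdash t:A\wedge B;\Delta$ infer $\Gamma\vdash(t\ \pi_1):A;\Delta$ and $\Gamma\vdash(t\ \pi_2):B;\Delta$; from $\Gamma\vdash t:A;\Delta$ infer $\Gamma\vdash\omega_1t:A\vee B;\Delta$; from $\Gamma\vdash t:B;\Delta$ infer $\Gamma\vdash\omega_2t:A\vee B;\Delta$; from $\Gamma\vdash t:A\vee B;\Delta$, $\Gamma,x:A\vdash u:C;\Delta$, $\Gamma,y:B\vdash v:C;\Delta$ infer $\Gamma\vdash(t\ [x.u,y.v]):C;\Delta$; from $\Gamma\vdash t:A;\Delta,a:A$ infer $\Gamma\vdash(a\ t):\perp;\Delta,a:A$; from $\Gamma\vdash t:\perp;\Delta,a:A$ infer $\Gamma\vdash\mu a.t:A;\Delta$. Reduction $\triangleright$ is the compatible closure of: $(\lambda x.u\ v)\triangleright u[x:=v]$; $(\langle t_1,t_2\rangle\ \pi_i)\triangleright t_i$; $(\omega_i t\ [x_1.u_1,x_2.u_2])\triangleright u_i[x_i:=t]$; $((t\ [x_1.u_1,x_2.u_2])\ \varepsilon)\triangleright(t\ [x_1.(u_1\ \varepsilon),x_2.(u_2\ \varepsilon)])$; $(\mu a.t\ \varepsilon)\triangleright\mu a.t[a:=^*\varepsilon]$; $\triangleright^*$ is its reflexive-transitive closure. $\mathcal{E}^{<\omega}$ is the set of finite sequences of $\mathcal{E}$-terms; for $\bar w=w_1\dots w_n$, $(t\ \bar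 w)$ is $t$ if $n=0$ and $((t\ w_1)\ w_2\dots w_n)$ otherwise; $t[a:=^*\bar w]$ is obtained from $t$ by replacing inductively each subterm $(a\ v)$ by $(a\ (v\ \bar w))$. For $X\subseteq\mathcal{E}^{<\omega}$ and a set of terms $S$, $X\to S=\{t\mid (t\ \bar w)\in S\ \forall\bar w\in X\}$. A set of terms $S$ is $\mu$-saturated if (i) $u\in S$ and $v\triangleright^* u$ imply $v\in S$, and (ii) $t\in S$, $a\in\mathcal{A}$ imply $\mu a.t\in S$ and $(a\ t)\in S$. For sets of terms $K,L$ and fixed $\mu$-saturated $S$: $K\to L=\{t\mid (t\ u)\in L\ \forall u\in K\}$; $K\wedge L=\{t\mid (t\ \pi_1)\in K,\ (t\ \pi_2)\in L\}$; $K\vee L=\{t\mid$ for all $x,y,u,v$: if $u[x:=r]\in S$ and $v[y:=s]\in S$ for all $r\in K,s\in L$, then $(t\ [x.u,y.v])\in S\}$. A model $\mathcal{M}=\langle S;\{R_i\}_{i\in I}\rangle$ ($S$ $\mu$-saturated, each $R_i=X_i\to S$ with $X_i\subseteq\mathcal{E}^{<\omega}$) is the smallest set of sets of terms containing $S$ and all $R_i$ and closed under $\to,\wedge,\vee$. For $G\in\mathcal{M}$, $G^\perp=\bigcup\{X\subseteq\mathcal{E}^{<\omega}\mid G=X\to S\}$. An $\mathcal{M}$-interpretation is a map $I$ from propositional variables to $\mathcal{M}$, extended by $I(\perp)=S$, $I(A\to B)=I(A)\to I(B)$, $I(A\wedge B)=I(A)\wedge I(B)$, $I(A\vee B)=I(A)\vee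 I(B)$. *)

theory Defs
  imports Main
begin

datatype form = PVar nat | Bot | Imp form form | Conj form form | Disj form form

section \<open>Terms (de Bruijn indices; two separate index spaces)\<close>

text \<open>Var i : lambda-variable with index i; MVar a t : the term (a t) for the mu-variable
  with index a. Binders: Lam binds lambda-index 0; Mu binds mu-index 0;
  Case u v is the E-term [x.u, y.v], where x (resp. y) is lambda-index 0 in u (resp. v).\<close>

datatype trm = Var nat | Lam trm | App trm elim | Pair trm trm | Inj1 trm | Inj2 trm
  | Mu trm | MVar nat trm
and elim = ETrm trm | Proj1 | Proj2 | Case trm trm

definition up :: "(nat \<Rightarrow> nat) \<Rightarrow> nat \<Rightarrow> nat" where
  "up f i = (case i of 0 \<Rightarrow> 0 | Suc j \<Rightarrow> Suc (f j))"

definition scons :: "'a \<Rightarrow> (nat \<Rightarrow> 'a) \<Rightarrow> nat \<Rightarrow> 'a" where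
  "scons x f i = (case i of 0 \<Rightarrow> x | Suc j \<Rightarrow> f j)"

primrec ren :: "(nat \<Rightarrow> nat) \<Rightarrow> (nat \<Rightarrow> nat) \<Rightarrow> trm \<Rightarrow> trm"
  and rene :: "(nat \<Rightarrow> nat) \<Rightarrow> (nat \<Rightarrow> nat) \<Rightarrow> elim \<Rightarrow> elim" where
  "ren f g (Var i) = Var (f i)"
| "ren f g (Lam t) = Lam (ren (up f) g t)"
| "ren f g (App t e) = App (ren f g t) (rene f g e)"
| "ren f g (Pair t u) = Pair (ren f g t) (ren f g u)"
| "ren f g (Inj1 t) = Inj1 (ren f g t)"
| "ren f g (Inj2 t) = Inj2 (ren f g t)"
| "ren f g (Mu t) = Mu (ren f (up g) t)"
| "ren f g (MVar a t) = MVar (g a) (ren f g t)"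
| "rene f g (ETrm t) = ETrm (ren f g t)"
| "rene f g Proj1 = Proj1"
| "rene f g Proj2 = Proj2"
| "rene f g (Case u v) = Case (ren (up f) g u) (ren (up f) g v)"

primrec apps :: "trm \<Rightarrow> elim list \<Rightarrow> trm" where
  "apps t [] = t"
| "apps t (w # ws) = apps (App t w) ws"

text \<open>Simultaneous substitution t[x_i := sigma i, a_j :=* theta j]: each lambda-variable i is
  replaced by sigma i, and each subterm (a v) is replaced (inductively) by (a (v (theta a))).\<close>
primrec subst :: "(nat \<Rightarrow> trm) \<Rightarrow> (nat \<Rightarrow> elim list) \<Rightarrow> trm \<Rightarrow> trm"
  and subste :: "(nat \<Rightarrow> trm) \<Rightarrow> (nat \<Rightarrow> elim list) \<Rightarrow> elim \<Rightarrow> elim" where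
  "subst \<sigma> \<theta> (Var i) = \<sigma> i"
| "subst \<sigma> \<theta> (Lam t) =
     Lam (subst (scons (Var 0) (ren Suc id \<circ> \<sigma>)) (map (rene Suc id) \<circ> \<theta>) t)"
| "subst \<sigma> \<theta> (App t e) = App (subst \<sigma> \<theta> t) (subste \<sigma> \<theta> e)"
| "subst \<sigma> \<theta> (Pair t u) = Pair (subst \<sigma> \<theta> t) (subst \<sigma> \<theta> u)"
| "subst \<sigma> \<theta> (Inj1 t) = Inj1 (subst \<sigma> \<theta> t)"
| "subst \<sigma> \<theta> (Inj2 t) = Inj2 (subst \<sigma> \<theta> t)"
| "subst \<sigma> \<theta> (Mu t) =
     Mu (subst (ren id Suc \<circ> \<sigma>) (scons [] (map (rene id Suc) \<circ> \<theta>)) t)"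
| "subst \<sigma> \<theta> (MVar a t) = MVar a (apps (subst \<sigma> \<theta> t) (\<theta> a))"
| "subste \<sigma> \<theta> (ETrm t) = ETrm (subst \<sigma> \<theta> t)"
| "subste \<sigma> \<theta> Proj1 = Proj1"
| "subste \<sigma> \<theta> Proj2 = Proj2"
| "subste \<sigma> \<theta> (Case u v) =
     Case (subst (scons (Var 0) (ren Suc id \<circ> \<sigma>)) (map (rene Suc id) \<circ> \<theta>) u)
          (subst (scons (Var 0) (ren Suc id \<circ> \<sigma>)) (map (rene Suc id) \<circ> \<theta>) v)"

text \<open>u[x:=v], where x is the lambda-index 0 bound by the enclosing binder.\<close>
definition subst0 :: "trm \<Rightarrow> trm \<Rightarrow> trm" where
  "subst0 u v = subst (scons v Var) (\<lambda>_. []) u"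

text \<open>t[a:=* eps], where a is the mu-index 0 bound by the enclosing Mu;
  eps comes from outside, so it is shifted under the binder.\<close>
definition msubst0 :: "trm \<Rightarrow> elim \<Rightarrow> trm" where
  "msubst0 t e = subst Var (scons [rene id Suc e] (\<lambda>_. [])) t"

inductive red :: "trm \<Rightarrow> trm \<Rightarrow> bool"
  and rede :: "elim \<Rightarrow> elim \<Rightarrow> bool" where
  beta: "red (App (Lam u) (ETrm v)) (subst0 u v)"
| proj1: "red (App (Pair t1 t2) Proj1) t1"
| proj2: "red (App (Pair t1 t2) Proj2) t2"
| case1: "red (App (Inj1 t) (Case u1 u2)) (subst0 u1 t)"
| case2: "red (App (Inj2 t) (Case u1 u2)) (subst0 u2 t)"
| comm: "red (App (App t (Case u1 u2)) e)
              (App t (Case (App u1 (rene Suc id e)) (App u2 (rene Suc id e))))"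
| mu: "red (App (Mu t) e) (Mu (msubst0 t e))"
| c_lam: "red t t' \<Longrightarrow> red (Lam t) (Lam t')"
| c_app1: "red t t' \<Longrightarrow> red (App t e) (App t' e)"
| c_app2: "rede e e' \<Longrightarrow> red (App t e) (App t e')"
| c_pair1: "red t t' \<Longrightarrow> red (Pair t u) (Pair t' u)"
| c_pair2: "red u u' \<Longrightarrow> red (Pair t u) (Pair t u')"
| c_inj1: "red t t' \<Longrightarrow> red (Inj1 t) (Inj1 t')"
| c_inj2: "red t t' \<Longrightarrow> red (Inj2 t) (Inj2 t')"
| c_mu: "red t t' \<Longrightarrow> red (Mu t) (Mu t')"
| c_mvar: "red t t' \<Longrightarrow> red (MVar a t) (MVar a t')"
| ce_trm: "red t t' \<Longrightarrow> rede (ETrm t) (ETrm t')"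
| ce_case1: "red u u' \<Longrightarrow> rede (Case u v) (Case u' v)"
| ce_case2: "red v v' \<Longrightarrow> rede (Case u v) (Case u v')"

abbreviation reds :: "trm \<Rightarrow> trm \<Rightarrow> bool" where
  "reds \<equiv> red\<^sup>*\<^sup>*"

type_synonym ctx = "nat \<Rightarrow> form option"

inductive typing :: "ctx \<Rightarrow> trm \<Rightarrow> form \<Rightarrow> ctx \<Rightarrow> bool" where
  ax: "\<Gamma> x = Some A \<Longrightarrow> typing \<Gamma> (Var x) A \<Delta>"
| imp_i: "typing (scons (Some A) \<Gamma>) t B \<Delta> \<Longrightarrow> typing \<Gamma> (Lam t) (Imp A B) \<Delta>"
| imp_e: "typing \<Gamma> u (Imp A B) \<Delta> \<Longrightarrow> typing \<Gamma> v A \<Delta> \<Longrightarrow> typing \<Gamma> (App u (ETrm v)) B \<Delta>"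
| conj_i: "typing \<Gamma> u A \<Delta> \<Longrightarrow> typing \<Gamma> v B \<Delta> \<Longrightarrow> typing \<Gamma> (Pair u v) (Conj A B) \<Delta>"
| conj_e1: "typing \<Gamma> t (Conj A B) \<Delta> \<Longrightarrow> typing \<Gamma> (App t Proj1) A \<Delta>"
| conj_e2: "typing \<Gamma> t (Conj A B) \<Delta> \<Longrightarrow> typing \<Gamma> (App t Proj2) B \<Delta>"
| disj_i1: "typing \<Gamma> t A \<Delta> \<Longrightarrow> typing \<Gamma> (Inj1 t) (Disj A B) \<Delta>"
| disj_i2: "typing \<Gamma> t B \<Delta> \<Longrightarrow> typing \<Gamma> (Inj2 t) (Disj A B) \<Delta>"
| disj_e: "typing \<Gamma> t (Disj A B) \<Delta> \<Longrightarrow> typing (scons (Some A) \<Gamma>) u C \<Delta> \<Longrightarrow>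
           typing (scons (Some B) \<Gamma>) v C \<Delta> \<Longrightarrow> typing \<Gamma> (App t (Case u v)) C \<Delta>"
| mvar: "\<Delta> a = Some A \<Longrightarrow> typing \<Gamma> t A \<Delta> \<Longrightarrow> typing \<Gamma> (MVar a t) Bot \<Delta>"
| mu: "typing \<Gamma> t Bot (scons (Some A) \<Delta>) \<Longrightarrow> typing \<Gamma> (Mu t) A \<Delta>"

text \<open>(ii) of mu-saturation: binding the free mu-variable with index k by mu.\<close>
definition mu_bind :: "nat \<Rightarrow> trm \<Rightarrow> trm" where
  "mu_bind k t = Mu (ren id (\<lambda>i. if i = k then 0 else Suc i) t)"

definition mu_saturated :: "trm set \<Rightarrow> bool" where
  "mu_saturated S \<longleftrightarrow>
     (\<forall>u v. u \<in> S \<and> reds v u \<longrightarrow> v \<in> S) \<and>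
     (\<forall>t a. t \<in> S \<longrightarrow> mu_bind a t \<in> S \<and> MVar a t \<in> S)"

definition seq_arrow :: "elim list set \<Rightarrow> trm set \<Rightarrow> trm set" where
  "seq_arrow X S = {t. \<forall>ws\<in>X. apps t ws \<in> S}"

definition s_imp :: "trm set \<Rightarrow> trm set \<Rightarrow> trm set" where
  "s_imp K L = {t. \<forall>u\<in>K. App t (ETrm u) \<in> L}"

definition s_conj :: "trm set \<Rightarrow> trm set \<Rightarrow> trm set" where
  "s_conj K L = {t. App t Proj1 \<in> K \<and> App t Proj2 \<in> L}"

definition s_disj :: "trm set \<Rightarrow> trm set \<Rightarrow> trm set \<Rightarrow> trm set" where
  "s_disj S K L = {t. \<forall>u v. (\<forall>r\<in>K. subst0 u r \<in> S) \<and> (\<forall>s\<in>L. subst0 v s \<in> S)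
                        \<longrightarrow> App t (Case u v) \<in> S}"

text \<open>The model generated by S and R_i = X i \<rightarrow> S.\<close>
inductive_set model :: "trm set \<Rightarrow> ('i \<Rightarrow> elim list set) \<Rightarrow> trm set set"
  for S :: "trm set" and X :: "'i \<Rightarrow> elim list set" where
  base: "S \<in> model S X"
| gen: "seq_arrow (X i) S \<in> model S X"
| imp: "K \<in> model S X \<Longrightarrow> L \<in> model S X \<Longrightarrow> s_imp K L \<in> model S X"
| conj: "K \<in> model S X \<Longrightarrow> L \<in> model S X \<Longrightarrow> s_conj K L \<in> model S X"
| disj: "K \<in> model S X \<Longrightarrow> L \<in> model S X \<Longrightarrow> s_disj S K L \<in> model S X"

definition perp :: "trm set \<Rightarrow> trm set \<Rightarrow> elim list set" where
  "perp S G = \<Union>{Y. G = seq_arrow Y S}"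

primrec interp :: "trm set \<Rightarrow> (nat \<Rightarrow> trm set) \<Rightarrow> form \<Rightarrow> trm set" where
  "interp S I (PVar p) = I p"
| "interp S I Bot = S"
| "interp S I (Imp A B) = s_imp (interp S I A) (interp S I B)"
| "interp S I (Conj A B) = s_conj (interp S I A) (interp S I B)"
| "interp S I (Disj A B) = s_disj S (interp S I A) (interp S I B)"

end

theory Submission
  imports Defs
begin


lemma up_simps[simp]: "up f 0 = 0" "up f (Suc j) = Suc (f j)"
  by (simp_all add: up_def)
lemma scons_simps[simp]: "scons x s 0 = x" "scons x s (Suc j) = s j"
  by (simp_all add: scons_def)
lemma up_id[simp]: "up id = id"
  by (simp add: fun_eq_iff up_def split: nat.split)
lemma up_id'[simp]: "up (\<lambda>a. a) = (\<lambda>a. a)"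
  by (simp add: fun_eq_iff up_def split: nat.split)
lemma up_Suc[simp]: "up f \<circ> Suc = Suc \<circ> f"
  by (simp add: fun_eq_iff)
lemma case_nat_Suc_comp[simp]: "case_nat a f \<circ> Suc = f"
  by (simp add: fun_eq_iff)
lemma up_comp: "up f \<circ> up g = up (f \<circ> g)"
  by (simp add: fun_eq_iff up_def split: nat.split)
lemma scons_up: "scons x s \<circ> up f = scons x (s \<circ> f)"
  by (simp add: fun_eq_iff up_def scons_def split: nat.split)
lemma scons_Suc[simp]: "scons x s \<circ> Suc = s"
  by (simp add: fun_eq_iff)

primrec gsub :: "(nat \<Rightarrow> trm) \<Rightarrow> (nat \<Rightarrow> elim list) \<Rightarrow> (nat \<Rightarrow> nat) \<Rightarrow> trm \<Rightarrow> trm"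
  and gsube :: "(nat \<Rightarrow> trm) \<Rightarrow> (nat \<Rightarrow> elim list) \<Rightarrow> (nat \<Rightarrow> nat) \<Rightarrow> elim \<Rightarrow> elim" where
  "gsub \<sigma> \<theta> k (Var i) = \<sigma> i"
| "gsub \<sigma> \<theta> k (Lam t) =
     Lam (gsub (scons (Var 0) (ren Suc id \<circ> \<sigma>)) (map (rene Suc id) \<circ> \<theta>) k t)"
| "gsub \<sigma> \<theta> k (App t e) = App (gsub \<sigma> \<theta> k t) (gsube \<sigma> \<theta> k e)"
| "gsub \<sigma> \<theta> k (Pair t u) = Pair (gsub \<sigma> \<theta> k t) (gsub \<sigma> \<theta> k u)"
| "gsub \<sigma> \<theta> k (Inj1 t) = Inj1 (gsub \<sigma> \<theta> k t)"
| "gsub \<sigma> \<theta> k (Inj2 t) = Inj2 (gsub \<sigma> \<theta> k t)"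
| "gsub \<sigma> \<theta> k (Mu t) =
     Mu (gsub (ren id Suc \<circ> \<sigma>) (scons [] (map (rene id Suc) \<circ> \<theta>)) (up k) t)"
| "gsub \<sigma> \<theta> k (MVar a t) = MVar (k a) (apps (gsub \<sigma> \<theta> k t) (\<theta> a))"
| "gsube \<sigma> \<theta> k (ETrm t) = ETrm (gsub \<sigma> \<theta> k t)"
| "gsube \<sigma> \<theta> k Proj1 = Proj1"
| "gsube \<sigma> \<theta> k Proj2 = Proj2"
| "gsube \<sigma> \<theta> k (Case u v) =
     Case (gsub (scons (Var 0) (ren Suc id \<circ> \<sigma>)) (map (rene Suc id) \<circ> \<theta>) k u)
          (gsub (scons (Var 0) (ren Suc id \<circ> \<sigma>)) (map (rene Suc id) \<circ> \<theta>) k v)"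

lemma subst_gsub: "subst \<sigma> \<theta> t = gsub \<sigma> \<theta> id t" "subste \<sigma> \<theta> e = gsube \<sigma> \<theta> id e"
  by (induct t and e arbitrary: \<sigma> \<theta> and \<sigma> \<theta> rule: trm.induct elim.induct) auto

lemma apps_append: "apps t (xs @ ys) = apps (apps t xs) ys"
  by (induct xs arbitrary: t) auto
lemma ren_apps: "ren f g (apps t ws) = apps (ren f g t) (map (rene f g) ws)"
  by (induct ws arbitrary: t) auto
lemma gsub_apps: "gsub \<sigma> \<theta> k (apps t ws) = apps (gsub \<sigma> \<theta> k t) (map (gsube \<sigma> \<theta> k) ws)"
  by (induct ws arbitrary: t) auto

lemma ren_ren: "ren f g (ren f' g' t) = ren (f \<circ> f') (g \<circ> g') t"
  "rene f g (rene f' g' e) = rene (f \<circ> f') (g \<circ> g') e"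
  by (induct t and e arbitrary: f g f' g' and f g f' g' rule: trm.induct elim.induct)
     (auto simp: up_comp)

lemma ren_id: "ren id id t = t" "rene id id e = e"
  by (induct t and e rule: trm.induct elim.induct) auto


lemma gsub_cong3: "\<sigma> = \<sigma>' \<Longrightarrow> \<theta> = \<theta>' \<Longrightarrow> k = k' \<Longrightarrow> gsub \<sigma> \<theta> k t = gsub \<sigma>' \<theta>' k' t"
  by simp

lemma ren_gsub:
  "ren f g (gsub \<sigma> \<theta> k t) = gsub (ren f g \<circ> \<sigma>) (map (rene f g) \<circ> \<theta>) (g \<circ> k) t"
  "rene f g (gsube \<sigma> \<theta> k e) = gsube (ren f g \<circ> \<sigma>) (map (rene f g) \<circ> \<theta>) (g \<circ> k) e"
  by (induct t and e arbitrary: f g \<sigma> \<theta> k and f g \<sigma> \<theta> k rule: trm.induct elim.induct)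
    (auto intro!: gsub_cong3 simp: fun_eq_iff scons_def up_def ren_ren ren_apps split: nat.split)

lemma gsub_ren:
  "gsub \<sigma> \<rho> k (ren f g t) = gsub (\<sigma> \<circ> f) (\<rho> \<circ> g) (k \<circ> g) t"
  "gsube \<sigma> \<rho> k (rene f g e) = gsube (\<sigma> \<circ> f) (\<rho> \<circ> g) (k \<circ> g) e"
  by (induct t and e arbitrary: f g \<sigma> \<rho> k and f g \<sigma> \<rho> k rule: trm.induct elim.induct)
    (auto intro!: gsub_cong3 simp: fun_eq_iff scons_def up_def split: nat.split)

lemma gsub_Var: "gsub Var (\<lambda>_. []) k t = ren id k t" "gsube Var (\<lambda>_. []) k e = rene id k e"
proof (induct t and e arbitrary: k and k rule: trm.induct elim.induct)
  case (Lam t)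
  have 1: "scons (Var 0) (ren Suc id \<circ> Var) = Var" by (auto simp: fun_eq_iff scons_def split: nat.split)
  have 2: "map (rene Suc id) \<circ> (\<lambda>_. []) = (\<lambda>_. [])" by auto
  show ?case using Lam by (simp add: 1 2)
next
  case (Case u v)
  have 1: "scons (Var 0) (ren Suc id \<circ> Var) = Var" by (auto simp: fun_eq_iff scons_def split: nat.split)
  have 2: "map (rene Suc id) \<circ> (\<lambda>_. []) = (\<lambda>_. [])" by auto
  show ?case using Case by (simp add: 1 2)
next
  case (Mu t)
  have 1: "ren id Suc \<circ> Var = Var" by (auto simp: fun_eq_iff)
  have 2: "scons [] (map (rene id Suc) \<circ> (\<lambda>_. [])) = (\<lambda>_. [])" by (auto simp: fun_eq_iff scons_def split: nat.split)
  show ?case using Mu by (simp add: 1 2)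
qed auto

lemma gsub_gsub:
  "gsub \<tau> \<rho> id (gsub \<sigma> \<theta> k t) = gsub (gsub \<tau> \<rho> id \<circ> \<sigma>) (\<lambda>a. map (gsube \<tau> \<rho> id) (\<theta> a) @ \<rho> (k a)) k t"
  "gsube \<tau> \<rho> id (gsube \<sigma> \<theta> k e) = gsube (gsub \<tau> \<rho> id \<circ> \<sigma>) (\<lambda>a. map (gsube \<tau> \<rho> id) (\<theta> a) @ \<rho> (k a)) k e"
proof (induct t and e arbitrary: \<tau> \<rho> \<sigma> \<theta> k and \<tau> \<rho> \<sigma> \<theta> k rule: trm.induct elim.induct)
  case (Mu t)
  show ?case
    apply (simp only: gsub.simps up_id Mu)
    by (auto simp: comp_def intro!: gsub_cong3 simp: fun_eq_iff scons_def up_def gsub_ren ren_gsub split: nat.split)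
qed (auto intro!: gsub_cong3 simp: fun_eq_iff scons_def up_def gsub_ren ren_gsub gsub_apps apps_append split: nat.split)

lemma cancel_Suc: "gsub (scons u Var) (\<lambda>_. []) id (ren Suc id v) = v"
  "gsube (scons u Var) (\<lambda>_. []) id (rene Suc id e) = e"
  by (simp_all add: gsub_ren gsub_Var ren_id)

lemma subst0_lam:
  "subst0 (gsub (scons (Var 0) (ren Suc id \<circ> \<sigma>)) (map (rene Suc id) \<circ> \<theta>) g t) u = gsub (scons u \<sigma>) \<theta> g t"
  unfolding subst0_def subst_gsub gsub_gsub
  by (rule gsub_cong3) (auto simp: fun_eq_iff scons_def cancel_Suc map_idI split: nat.split)

lemma subst0_apps: "subst0 (apps U (map (rene Suc id) ws)) r = apps (subst0 U r) ws"
  unfolding subst0_def subst_gsub gsub_apps by (simp add: cancel_Suc map_idI)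

lemma mu_shift: "gsub Var (scons W (\<lambda>_. [])) id (ren id Suc v) = ren id Suc v"
  "gsube Var (scons W (\<lambda>_. [])) id (rene id Suc e) = rene id Suc e"
  by (simp_all add: gsub_ren gsub_Var)

lemma msubst_comp: "subst Var (scons W (\<lambda>_. [])) (msubst0 b e) = subst Var (scons (rene id Suc e # W) (\<lambda>_. [])) b"
  unfolding msubst0_def subst_gsub gsub_gsub
  by (rule gsub_cong3) (auto simp: fun_eq_iff scons_def mu_shift split: nat.split)

lemma subst_nil: "subst Var (scons [] (\<lambda>_. [])) b = b"
proof -
  have "scons [] (\<lambda>_. []) = (\<lambda>_. ([]::elim list))" by (auto simp: fun_eq_iff scons_def split: nat.split)
  then show ?thesis by (simp add: subst_gsub gsub_Var ren_id)
qed

lemma c_eq: "subst Var (scons W (\<lambda>_. [])) (gsub (ren id Suc \<circ> \<sigma>) (scons [] (map (rene id Suc) \<circ> \<theta>)) (up g) t)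
   = gsub (ren id Suc \<circ> \<sigma>) (scons W (map (rene id Suc) \<circ> \<theta>)) (up g) t"
  unfolding subst_gsub gsub_gsub
  by (rule gsub_cong3) (auto simp: fun_eq_iff scons_def mu_shift up_def map_idI split: nat.split)

lemma red_apps: "red t t' \<Longrightarrow> red (apps t ws) (apps t' ws)"
  by (induct ws arbitrary: t t') (auto intro: red_rede.c_app1)

lemma reds_apps: "reds t t' \<Longrightarrow> reds (apps t ws) (apps t' ws)"
  by (induct rule: rtranclp_induct) (auto intro: rtranclp.rtrancl_into_rtrancl red_apps)

lemma reds_mu: "reds (apps (Mu b) ws) (Mu (subst Var (scons (map (rene id Suc) ws) (\<lambda>_. [])) b))"
proof (induct ws arbitrary: b)
  case Nil then show ?case by (simp add: subst_nil)
next
  case (Cons e ws)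
  have "reds (apps (App (Mu b) e) ws) (apps (Mu (msubst0 b e)) ws)"
    by (rule reds_apps) (auto intro: red_rede.mu)
  also have "reds \<dots> (Mu (subst Var (scons (map (rene id Suc) ws) (\<lambda>_. [])) (msubst0 b e)))"
    by (rule Cons)
  finally show ?case by (simp add: msubst_comp id_def)
qed

lemma reds_case: "reds (apps (App T (Case U V)) ws)
   (App T (Case (apps U (map (rene Suc id) ws)) (apps V (map (rene Suc id) ws))))"
proof (induct ws arbitrary: U V)
  case Nil then show ?case by simp
next
  case (Cons e ws)
  have "reds (apps (App (App T (Case U V)) e) ws) (apps (App T (Case (App U (rene Suc id e)) (App V (rene Suc id e)))) ws)"
    by (rule reds_apps) (auto intro: red_rede.comm)
  also note Cons
  finally show ?case by (simp add: id_def)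
qed

primrec fvm :: "trm \<Rightarrow> nat set" and fvme :: "elim \<Rightarrow> nat set" where
  "fvm (Var i) = {}"
| "fvm (Lam t) = fvm t"
| "fvm (App t e) = fvm t \<union> fvme e"
| "fvm (Pair t u) = fvm t \<union> fvm u"
| "fvm (Inj1 t) = fvm t"
| "fvm (Inj2 t) = fvm t"
| "fvm (Mu t) = {j. Suc j \<in> fvm t}"
| "fvm (MVar a t) = insert a (fvm t)"
| "fvme (ETrm t) = fvm t"
| "fvme Proj1 = {}"
| "fvme Proj2 = {}"
| "fvme (Case u v) = fvm u \<union> fvm v"

lemma finite_pred: "finite F \<Longrightarrow> finite {j. Suc j \<in> F}"
proof -
  assume "finite F"
  moreover have "{j. Suc j \<in> F} \<subseteq> (\<lambda>x. x - 1) ` F" by force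
  ultimately show ?thesis by (rule finite_surj)
qed

lemma finite_fvm: "finite (fvm t)" "finite (fvme e)"
  by (induct t and e rule: trm.induct elim.induct) (auto intro: finite_pred)

lemma ren_cong: "(\<forall>a\<in>fvm t. g a = g' a) \<Longrightarrow> ren f g t = ren f g' t"
  "(\<forall>a\<in>fvme e. g a = g' a) \<Longrightarrow> rene f g e = rene f g' e"
proof (induct t and e arbitrary: f g g' and f g g' rule: trm.induct elim.induct)
  case (Mu t)
  have "\<forall>a\<in>fvm t. up g a = up g' a"
    using Mu.prems by (auto simp: up_def split: nat.split)
  then show ?case using Mu.hyps by simp
qed auto

lemma gsub_cong: "(\<forall>a\<in>fvm t. g a = g' a) \<Longrightarrow> gsub \<sigma> \<theta> g t = gsub \<sigma> \<theta> g' t"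
  "(\<forall>a\<in>fvme e. g a = g' a) \<Longrightarrow> gsube \<sigma> \<theta> g e = gsube \<sigma> \<theta> g' e"
proof (induct t and e arbitrary: \<sigma> \<theta> g g' and \<sigma> \<theta> g g' rule: trm.induct elim.induct)
  case (Mu t)
  have "\<forall>a\<in>fvm t. up g a = up g' a"
    using Mu.prems by (auto simp: up_def split: nat.split)
  then show ?case using Mu.hyps by simp
next
  case (MVar a t)
  have h: "gsub \<sigma> \<theta> g t = gsub \<sigma> \<theta> g' t" using MVar by (metis fvm.simps(8) insert_iff)
  show ?case using MVar.prems by (simp only: gsub.simps h) simp
qed auto

lemma model_arrow: "G \<in> model S X \<Longrightarrow> \<exists>Y. G = seq_arrow Y S"
proof (induct rule: model.induct)
  case base
  have "S = seq_arrow {[]} S" by (auto simp: seq_arrow_def)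
  then show ?case by blast
next
  case (gen i) then show ?case by blast
next
  case (imp K L)
  then obtain Y where Y: "L = seq_arrow Y S" by blast
  have "s_imp K L = seq_arrow {ETrm u # ws | u ws. u \<in> K \<and> ws \<in> Y} S"
    by (auto simp: Y s_imp_def seq_arrow_def) (metis apps.simps(2))
  then show ?case by blast
next
  case (conj K L)
  then obtain Y1 Y2 where Y: "K = seq_arrow Y1 S" "L = seq_arrow Y2 S" by blast
  have "s_conj K L = seq_arrow ({Proj1 # ws | ws. ws \<in> Y1} \<union> {Proj2 # ws | ws. ws \<in> Y2}) S"
    by (auto simp: Y s_conj_def seq_arrow_def) (metis (mono_tags, lifting) UnI1 UnI2 apps.simps(2) mem_Collect_eq)+
  then show ?case by blast
next
  case (disj K L)
  have "s_disj S K L = seq_arrow {[Case u v] | u v. (\<forall>r\<in>K. subst0 u r \<in> S) \<and> (\<forall>s\<in>L. subst0 v s \<in> S)} S"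
    by (auto simp: s_disj_def seq_arrow_def) (metis apps.simps)
  then show ?case by blast
qed

lemma model_perp: "G \<in> model S X \<Longrightarrow> G = seq_arrow (perp S G) S"
proof -
  assume "G \<in> model S X"
  then obtain Y where Y: "G = seq_arrow Y S" using model_arrow by blast
  show ?thesis
  proof
    show "G \<subseteq> seq_arrow (perp S G) S"
      unfolding perp_def seq_arrow_def by auto
    show "seq_arrow (perp S G) S \<subseteq> G"
      using Y unfolding perp_def seq_arrow_def by auto
  qed
qed

lemma perp_apps: "t \<in> G \<Longrightarrow> ws \<in> perp S G \<Longrightarrow> apps t ws \<in> S"
  unfolding perp_def seq_arrow_def by auto

lemma model_back: "G \<in> model S X \<Longrightarrow> mu_saturated S \<Longrightarrow> reds v u \<Longrightarrow> u \<in> G \<Longrightarrow> v \<in> G"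
proof -
  assume G: "G \<in> model S X" and S: "mu_saturated S" and r: "reds v u" and u: "u \<in> G"
  obtain Y where Y: "G = seq_arrow Y S" using model_arrow[OF G] by blast
  show "v \<in> G" unfolding Y seq_arrow_def
  proof safe
    fix ws assume "ws \<in> Y"
    then have "apps u ws \<in> S" using u Y by (auto simp: seq_arrow_def)
    moreover have "reds (apps v ws) (apps u ws)" using r by (rule reds_apps)
    ultimately show "apps v ws \<in> S" using S unfolding mu_saturated_def by blast
  qed
qed

lemma interp_model: "\<forall>p. I p \<in> model S X \<Longrightarrow> interp S I A \<in> model S X"
  by (induct A) (auto intro: model.intros)

lemma finite_dom_scons: "finite (dom \<Gamma>) \<Longrightarrow> finite (dom (scons x \<Gamma>))"
proof -
  assume "finite (dom \<Gamma>)"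
  moreover have "dom (scons x \<Gamma>) \<subseteq> insert 0 (Suc ` dom \<Gamma>)"
  proof
    fix i assume "i \<in> dom (scons x \<Gamma>)"
    then show "i \<in> insert 0 (Suc ` dom \<Gamma>)" by (cases i) auto
  qed
  ultimately show ?thesis by (meson finite_imageI finite_insert finite_subset)
qed

lemma sat_back: "mu_saturated S \<Longrightarrow> reds v u \<Longrightarrow> u \<in> S \<Longrightarrow> v \<in> S"
  unfolding mu_saturated_def by blast

lemma sat_mu: "mu_saturated S \<Longrightarrow> t \<in> S \<Longrightarrow> mu_bind a t \<in> S"
  unfolding mu_saturated_def by blast

lemma main:
  assumes S: "mu_saturated S" and IM: "\<forall>p. I p \<in> model S X"
  shows "typing \<Gamma> t A \<Delta> \<Longrightarrow> finite (dom \<Gamma>) \<Longrightarrow> finite (dom \<Delta>) \<Longrightarrow>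
    (\<forall>i B. \<Gamma> i = Some B \<longrightarrow> \<sigma> i \<in> interp S I B) \<Longrightarrow> (\<forall>i. \<Gamma> i = None \<longrightarrow> fvm (\<sigma> i) = {}) \<Longrightarrow>
    (\<forall>j B. \<Delta> j = Some B \<longrightarrow> \<theta> j \<in> perp S (interp S I B)) \<Longrightarrow> (\<forall>j. \<Delta> j = None \<longrightarrow> \<theta> j = []) \<Longrightarrow>
    gsub \<sigma> \<theta> g t \<in> interp S I A"
proof (induct arbitrary: \<sigma> \<theta> g rule: typing.induct)
  case (ax \<Gamma> x A \<Delta>)
  then show ?case by simp
next
  case (imp_i A \<Gamma> t B \<Delta>)
  show ?case unfolding interp.simps gsub.simps s_imp_def
  proof safe
    fix u assume u: "u \<in> interp S I A"
    have "gsub (scons u \<sigma>) \<theta> g t \<in> interp S I B"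
      apply (rule imp_i.hyps(2))
      using imp_i.prems u by (auto simp: finite_dom_scons[unfolded scons_def] scons_def split: nat.splits)
    moreover have "reds (App (Lam (gsub (scons (Var 0) (ren Suc id \<circ> \<sigma>)) (map (rene Suc id) \<circ> \<theta>) g t)) (ETrm u))
        (gsub (scons u \<sigma>) \<theta> g t)"
      using red_rede.beta[of "gsub (scons (Var 0) (ren Suc id \<circ> \<sigma>)) (map (rene Suc id) \<circ> \<theta>) g t" u]
      by (simp add: subst0_lam)
    ultimately show "App (Lam (gsub (scons (Var 0) (ren Suc id \<circ> \<sigma>)) (map (rene Suc id) \<circ> \<theta>) g t)) (ETrm u) \<in> interp S I B"
      using model_back[OF interp_model[OF IM] S] by blast
  qed
next
  case (imp_e \<Gamma> u A B \<Delta> v)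
  then show ?case by (auto simp: s_imp_def)
next
  case (conj_i \<Gamma> u A \<Delta> v B)
  have 1: "gsub \<sigma> \<theta> g u \<in> interp S I A" using conj_i by blast
  have 2: "gsub \<sigma> \<theta> g v \<in> interp S I B" using conj_i by blast
  show ?case unfolding interp.simps gsub.simps s_conj_def
    using model_back[OF interp_model[OF IM] S r_into_rtranclp[of red, OF red_rede.proj1] 1]
      model_back[OF interp_model[OF IM] S r_into_rtranclp[of red, OF red_rede.proj2] 2] by blast
next
  case (conj_e1 \<Gamma> t A B \<Delta>)
  then show ?case by (auto simp: s_conj_def)
next
  case (conj_e2 \<Gamma> t A B \<Delta>)
  then show ?case by (auto simp: s_conj_def)
next
  case (disj_i1 \<Gamma> t A \<Delta> B)
  have 1: "gsub \<sigma> \<theta> g t \<in> interp S I A" using disj_i1 by blast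
  show ?case unfolding interp.simps gsub.simps s_disj_def
    using 1 sat_back[OF S r_into_rtranclp[of red, OF red_rede.case1]] by blast
next
  case (disj_i2 \<Gamma> t B \<Delta> A)
  have 1: "gsub \<sigma> \<theta> g t \<in> interp S I B" using disj_i2 by blast
  show ?case unfolding interp.simps gsub.simps s_disj_def
    using 1 sat_back[OF S r_into_rtranclp[of red, OF red_rede.case2]] by blast
next
  case (disj_e \<Gamma> t A B \<Delta> u C v)
  let ?G = "interp S I C"
  have G: "?G \<in> model S X" by (rule interp_model[OF IM])
  have T: "gsub \<sigma> \<theta> g t \<in> s_disj S (interp S I A) (interp S I B)" using disj_e by simp
  have U: "gsub (scons r \<sigma>) \<theta> g u \<in> ?G" if "r \<in> interp S I A" for r
    apply (rule disj_e.hyps(4))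
    using disj_e.prems that by (auto simp: finite_dom_scons[unfolded scons_def] scons_def split: nat.splits)
  have V: "gsub (scons r \<sigma>) \<theta> g v \<in> ?G" if "r \<in> interp S I B" for r
    apply (rule disj_e.hyps(6))
    using disj_e.prems that by (auto simp: finite_dom_scons[unfolded scons_def] scons_def split: nat.splits)
  let ?s = "scons (Var 0) (ren Suc id \<circ> \<sigma>)" and ?t = "map (rene Suc id) \<circ> \<theta>"
  show ?case
  proof (subst model_perp[OF G], simp only: seq_arrow_def mem_Collect_eq, intro ballI)
    fix ws assume ws: "ws \<in> perp S ?G"
    let ?W = "map (rene Suc id) ws"
    have "App (gsub \<sigma> \<theta> g t) (Case (apps (gsub ?s ?t g u) ?W) (apps (gsub ?s ?t g v) ?W)) \<in> S"
    proof -
      have a: "\<forall>r\<in>interp S I A. subst0 (apps (gsub ?s ?t g u) ?W) r \<in> S"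
        using U ws by (auto simp: subst0_apps subst0_lam intro: perp_apps)
      have b: "\<forall>r\<in>interp S I B. subst0 (apps (gsub ?s ?t g v) ?W) r \<in> S"
        using V ws by (auto simp: subst0_apps subst0_lam intro: perp_apps)
      show ?thesis using T a b unfolding s_disj_def by blast
    qed
    then show "apps (gsub \<sigma> \<theta> g (App t (Case u v))) ws \<in> S"
      by (auto intro: sat_back[OF S reds_case])
  qed
next
  case (mvar \<Delta> a A \<Gamma> t)
  have 1: "gsub \<sigma> \<theta> g t \<in> interp S I A" using mvar by blast
  have 2: "\<theta> a \<in> perp S (interp S I A)" using mvar by blast
  show ?case using perp_apps[OF 1 2] S unfolding mu_saturated_def by simp
next
  case (mu \<Gamma> t A \<Delta>)
  let ?G = "interp S I A"
  have G: "?G \<in> model S X" by (rule interp_model[OF IM])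
  show ?case
  proof (subst model_perp[OF G], simp only: seq_arrow_def mem_Collect_eq gsub.simps, intro ballI)
    fix ws assume ws: "ws \<in> perp S ?G"
    let ?F = "g ` fvm (Mu t) \<union> (\<Union>i\<in>dom \<Gamma>. fvm (\<sigma> i)) \<union> (\<Union>j\<in>dom \<Delta>. \<Union>(fvme ` set (\<theta> j))) \<union> \<Union>(fvme ` set ws)"
    have fin: "finite ?F" using mu.prems by (intro finite_UnI finite_imageI finite_UN_I) (auto simp: finite_fvm finite_pred[OF finite_fvm(1)])
    obtain k where k: "k \<notin> ?F" using ex_new_if_finite[OF infinite_UNIV_nat fin] by (rule exE)
    let ?t0 = "gsub \<sigma> (scons ws \<theta>) (scons k g) t"
    have t0: "?t0 \<in> interp S I Bot"
      apply (rule mu.hyps(2))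
      using mu.prems ws by (auto simp: finite_dom_scons[unfolded scons_def] scons_def split: nat.splits)
    define \<rho> where "\<rho> = (\<lambda>i::nat. if i = k then 0 else Suc i)"
    have "mu_bind k ?t0 \<in> S" using t0 S by (simp add: sat_mu)
    then have m: "Mu (ren id \<rho> ?t0) \<in> S" unfolding mu_bind_def \<rho>_def .
    let ?W = "map (rene id Suc) ws"
    have e1: "ren id \<rho> \<circ> \<sigma> = ren id Suc \<circ> \<sigma>"
    proof
      fix i
      have "\<forall>a\<in>fvm (\<sigma> i). \<rho> a = Suc a"
        using k mu.prems(4) by (cases "\<Gamma> i") (auto simp: \<rho>_def)
      then show "(ren id \<rho> \<circ> \<sigma>) i = (ren id Suc \<circ> \<sigma>) i" unfolding comp_def by (rule ren_cong)
    qed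
    have e2: "map (rene id \<rho>) \<circ> scons ws \<theta> = scons ?W (map (rene id Suc) \<circ> \<theta>)"
    proof
      fix j
      show "(map (rene id \<rho>) \<circ> scons ws \<theta>) j = scons ?W (map (rene id Suc) \<circ> \<theta>) j"
      proof (cases j)
        case 0
        have "\<forall>e\<in>set ws. \<forall>a\<in>fvme e. \<rho> a = Suc a" using k by (auto simp: \<rho>_def)
        then show ?thesis using 0 by (auto intro!: ren_cong(2) map_cong)
      next
        case (Suc j')
        have "\<forall>e\<in>set (\<theta> j'). \<forall>a\<in>fvme e. \<rho> a = Suc a"
          using k mu.prems(6) by (cases "\<Delta> j'") (auto simp: \<rho>_def)
        then show ?thesis using Suc by (auto intro!: ren_cong(2) map_cong)
      qed
    qed
    have e3: "\<forall>a\<in>fvm t. (\<rho> \<circ> scons k g) a = up g a"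
    proof
      fix a assume a: "a \<in> fvm t"
      show "(\<rho> \<circ> scons k g) a = up g a"
      proof (cases a)
        case 0 then show ?thesis by (simp add: \<rho>_def)
      next
        case (Suc j)
        then have "j \<in> fvm (Mu t)" using a by simp
        then have "g j \<noteq> k" using k by blast
        then show ?thesis using Suc by (simp add: \<rho>_def)
      qed
    qed
    have "ren id \<rho> ?t0 = gsub (ren id Suc \<circ> \<sigma>) (scons ?W (map (rene id Suc) \<circ> \<theta>)) (up g) t"
      unfolding ren_gsub e1 e2 by (rule gsub_cong(1)[OF e3])
    also have "\<dots> = subst Var (scons ?W (\<lambda>_. [])) (gsub (ren id Suc \<circ> \<sigma>) (scons [] (map (rene id Suc) \<circ> \<theta>)) (up g) t)"
      by (rule c_eq[symmetric])
    finally have "Mu (subst Var (scons ?W (\<lambda>_. [])) (gsub (ren id Suc \<circ> \<sigma>) (scons [] (map (rene id Suc) \<circ> \<theta>)) (up g) t)) \<in> S"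
      using m by simp
    then show "apps (Mu (gsub (ren id Suc \<circ> \<sigma>) (scons [] (map (rene id Suc) \<circ> \<theta>)) (up g) t)) ws \<in> S"
      by (rule sat_back[OF S reds_mu, rotated])
  qed
qed


theorem mainTheorem4:
  fixes S :: "trm set" and X :: "'i \<Rightarrow> elim list set" and I :: "nat \<Rightarrow> trm set"
    and \<Gamma> \<Delta> :: ctx and \<sigma> :: "nat \<Rightarrow> trm" and \<theta> :: "nat \<Rightarrow> elim list"
    and t :: trm and A :: form
  assumes "mu_saturated S"
    and "\<forall>p. I p \<in> model S X"
    and "finite (dom \<Gamma>)" and "finite (dom \<Delta>)"
    and "\<forall>i B. \<Gamma> i = Some B \<longrightarrow> \<sigma> i \<in> interp S I B"
    and "\<forall>i. \<Gamma> i = None \<longrightarrow> \<sigma> i = Var i"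
    and "\<forall>j B. \<Delta> j = Some B \<longrightarrow> \<theta> j \<in> perp S (interp S I B)"
    and "\<forall>j. \<Delta> j = None \<longrightarrow> \<theta> j = []"
    and "typing \<Gamma> t A \<Delta>"
  shows "subst \<sigma> \<theta> t \<in> interp S I A"
proof -
  have "subst \<sigma> \<theta> t = gsub \<sigma> \<theta> id t" by (rule subst_gsub(1))
  moreover have "gsub \<sigma> \<theta> id t \<in> interp S I A"
    using main[OF assms(1,2) assms(9,3,4,5)] assms(6,7,8) by simp
  ultimately show ?thesis by simp
qed

end
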